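(* A connected graph $G$ is well-bicovered with $b(G)=3$ if and only if $G$ is obtained by taking a complete graph $K_n$ with $n\ge 2$ and attaching a pendant edge (a new vertex adjacent only to that vertex) to one vertex of $K_n$.
   Context: All graphs are finite and simple; "subgraph" means induced subgraph. $b(G)$ denotes the maximum order of an induced bipartite subgraph of $G$. $G$ is well-bicovered if every vertex-inclusion-maximal induced bipartite subgraph of $G$ has the same order. *)

theory Defs
  imports Main
begin

definition simple_graph :: "'a set \<Rightarrow> ('a \<Rightarrow> 'a \<Rightarrow> bool) \<Rightarrow> bool" where
  "simple_graph V E \<longleftrightarrow> finite V \<and> (\<forall>x y. E x y \<longrightarrow> x \<in> V \<and> y \<in> V)
     \<and> (\<forall>x y. E x y \<longrightarrow> E y x) \<and> (\<forall>x. \<not> E x x)"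

definition connected_graph :: "'a set \<Rightarrow> ('a \<Rightarrow> 'a \<Rightarrow> bool) \<Rightarrow> bool" where
  "connected_graph V E \<longleftrightarrow> V \<noteq> {} \<and> (\<forall>x\<in>V. \<forall>y\<in>V. E\<^sup>*\<^sup>* x y)"

definition induced_bipartite :: "'a set \<Rightarrow> ('a \<Rightarrow> 'a \<Rightarrow> bool) \<Rightarrow> 'a set \<Rightarrow> bool" where
  "induced_bipartite V E S \<longleftrightarrow> S \<subseteq> V \<and>
     (\<exists>A B. S = A \<union> B \<and> A \<inter> B = {} \<and>
        (\<forall>x\<in>A. \<forall>y\<in>A. \<not> E x y) \<and> (\<forall>x\<in>B. \<forall>y\<in>B. \<not> E x y))"

definition maximal_induced_bipartite :: "'a set \<Rightarrow> ('a \<Rightarrow> 'a \<Rightarrow> bool) \<Rightarrow> 'a set \<Rightarrow> bool" where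
  "maximal_induced_bipartite V E S \<longleftrightarrow> induced_bipartite V E S \<and>
     (\<forall>T. induced_bipartite V E T \<and> S \<subseteq> T \<longrightarrow> T = S)"

definition bip_number :: "'a set \<Rightarrow> ('a \<Rightarrow> 'a \<Rightarrow> bool) \<Rightarrow> nat" where
  "bip_number V E = Max (card ` {S. induced_bipartite V E S})"

definition well_bicovered :: "'a set \<Rightarrow> ('a \<Rightarrow> 'a \<Rightarrow> bool) \<Rightarrow> bool" where
  "well_bicovered V E \<longleftrightarrow> (\<forall>S T. maximal_induced_bipartite V E S \<and> maximal_induced_bipartite V E T
      \<longrightarrow> card S = card T)"

definition clique_with_pendant :: "'a set \<Rightarrow> ('a \<Rightarrow> 'a \<Rightarrow> bool) \<Rightarrow> bool" where
  "clique_with_pendant V E \<longleftrightarrow> (\<exists>v w. v \<in> V \<and> w \<in> V \<and> v \<noteq> w \<and>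
      card (V - {w}) \<ge> 2 \<and>
      (\<forall>x\<in>V - {w}. \<forall>y\<in>V - {w}. x \<noteq> y \<longrightarrow> E x y) \<and>
      (\<forall>x\<in>V. E w x \<longleftrightarrow> x = v))"

end

theory Submission
  imports Defs
begin

lemma bip_fin:
  assumes "finite V"
  shows "finite {S. induced_bipartite V E S}"
  by (rule finite_subset[of _ "Pow V"]) (auto simp: induced_bipartite_def assms)

lemma bip_sub:
  assumes "induced_bipartite V E T" "S \<subseteq> T"
  shows "induced_bipartite V E S"
proof -
  obtain A B where "T \<subseteq> V" "T = A \<union> B" "A \<inter> B = {}" "\<forall>x\<in>A. \<forall>y\<in>A. \<not> E x y" "\<forall>x\<in>B. \<forall>y\<in>B. \<not> E x y"
    using assms(1) unfolding induced_bipartite_def by blast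
  have "S = (A \<inter> S) \<union> (B \<inter> S) \<and> (A \<inter> S) \<inter> (B \<inter> S) = {} \<and> (\<forall>x\<in>A \<inter> S. \<forall>y\<in>A \<inter> S. \<not> E x y) \<and> (\<forall>x\<in>B \<inter> S. \<forall>y\<in>B \<inter> S. \<not> E x y)"
    using assms(2) \<open>T = A \<union> B\<close> \<open>A \<inter> B = {}\<close> \<open>\<forall>x\<in>A. \<forall>y\<in>A. \<not> E x y\<close> \<open>\<forall>x\<in>B. \<forall>y\<in>B. \<not> E x y\<close> by blast
  moreover have "S \<subseteq> V" using assms(2) \<open>T \<subseteq> V\<close> by blast
  ultimately show ?thesis unfolding induced_bipartite_def by blast
qed

lemma bip_triangle:
  assumes "induced_bipartite V E T" "x \<in> T" "y \<in> T" "z \<in> T" "E x y" "E y z" "E x z"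
  shows False
proof -
  obtain A B where "T = A \<union> B" "A \<inter> B = {}" "\<forall>x\<in>A. \<forall>y\<in>A. \<not> E x y" "\<forall>x\<in>B. \<forall>y\<in>B. \<not> E x y"
    using assms(1) unfolding induced_bipartite_def by blast
  then show False using assms by blast
qed

lemma bip_max_ext:
  assumes "finite V" "induced_bipartite V E S"
  shows "\<exists>T. maximal_induced_bipartite V E T \<and> S \<subseteq> T"
proof -
  obtain m where "m \<in> {S. induced_bipartite V E S}" "S \<subseteq> m"
    "\<forall>b\<in>{S. induced_bipartite V E S}. m \<subseteq> b \<longrightarrow> m = b"
    using finite_has_maximal2[OF bip_fin[OF assms(1)], of S E] assms(2) by auto
  then show ?thesis unfolding maximal_induced_bipartite_def by auto
qed

lemma rtc_edge:
  assumes "E\<^sup>*\<^sup>* x y" "x \<noteq> y"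
  shows "\<exists>z. E x z"
  using assms by (metis converse_rtranclpE)

lemma backward:
  assumes sg: "simple_graph V E" and cp: "clique_with_pendant V E"
  shows "well_bicovered V E \<and> bip_number V E = 3"
proof -
  have fin: "finite V" and symm: "\<And>x y. E x y \<Longrightarrow> E y x" and irr: "\<And>x. \<not> E x x"
    and inV: "\<And>x y. E x y \<Longrightarrow> x \<in> V \<and> y \<in> V"
    using sg unfolding simple_graph_def by auto
  obtain v w where vV: "v \<in> V" and wV: "w \<in> V" and vw: "v \<noteq> w" and c2: "card (V - {w}) \<ge> 2"
    and cl: "\<forall>x\<in>V - {w}. \<forall>y\<in>V - {w}. x \<noteq> y \<longrightarrow> E x y"
    and pw: "\<forall>x\<in>V. E w x \<longleftrightarrow> x = v"
    using cp unfolding clique_with_pendant_def by blast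
  have nw: "\<not> E w x" if "x \<noteq> v" for x
    using pw that inV by blast
  have ub: "card (S - {w}) \<le> 2" if "induced_bipartite V E S" for S
  proof (rule ccontr)
    assume "\<not> ?thesis"
    then have "Suc (Suc (Suc 0)) \<le> card (S - {w})" by simp
    then obtain x y z where "x \<in> S - {w}" "y \<in> S - {w}" "z \<in> S - {w}" "x \<noteq> y" "y \<noteq> z" "x \<noteq> z"
      unfolding card_le_Suc_iff by blast
    moreover have "S \<subseteq> V" using that unfolding induced_bipartite_def by auto
    ultimately show False using bip_triangle[OF that, of x y z] cl by blast
  qed
  have finS: "finite S" if "S \<subseteq> V" for S using fin that finite_subset by auto
  have lb: "induced_bipartite V E S" if SV: "S \<subseteq> V" and cS: "card (S - {w}) \<le> 2" for S
  proof (cases "v \<in> S")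
    case True
    have f: "finite (S - {w} - {v})" using finS[OF SV] by auto
    have "card (S - {w} - {v}) \<le> Suc 0" using cS True vw by (simp add: card_Diff_singleton)
    then have one: "\<forall>a\<in>S - {w} - {v}. \<forall>b\<in>S - {w} - {v}. a = b" using card_le_Suc0_iff_eq[OF f] by blast
    show ?thesis unfolding induced_bipartite_def
      apply (rule conjI[OF SV], rule exI[of _ "{v}"], rule exI[of _ "S - {v}"])
      apply (intro conjI)
      using True irr apply blast
         apply blast
      using irr apply blast
    proof (intro ballI)
      fix x y assume x: "x \<in> S - {v}" and y: "y \<in> S - {v}"
      show "\<not> E x y"
      proof (cases "x = w \<or> y = w")
        case True
        then show ?thesis using x y nw symm by blast
      next
        case False
        then have "x = y" using one x y by blast
        then show ?thesis using irr by blast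
      qed
    qed
  next
    case False
    show ?thesis
    proof (cases "S - {w} = {}")
      case True
      show ?thesis unfolding induced_bipartite_def
        apply (rule conjI[OF SV], rule exI[of _ "S"], rule exI[of _ "{}"])
        using irr True by auto
    next
      case ne: False
      then obtain a where a: "a \<in> S - {w}" by blast
      have f: "finite (S - {w} - {a})" using finS[OF SV] by auto
      have "card (S - {w} - {a}) \<le> Suc 0" using cS a by (simp add: card_Diff_singleton)
      then have one: "\<forall>x\<in>S - {w} - {a}. \<forall>b\<in>S - {w} - {a}. x = b" using card_le_Suc0_iff_eq[OF f] by blast
      have av: "a \<noteq> v" using a False by auto
      show ?thesis unfolding induced_bipartite_def
        apply (rule conjI[OF SV], rule exI[of _ "S \<inter> {a, w}"], rule exI[of _ "S - {a, w}"])
        apply (intro conjI)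
           apply blast
          apply blast
      proof (intro ballI)
        fix x y assume x: "x \<in> S \<inter> {a, w}" and y: "y \<in> S \<inter> {a, w}"
        show "\<not> E x y"
        proof (cases "x = y")
          case True then show ?thesis using irr by blast
        next
          case False
          then have "(x = a \<and> y = w) \<or> (x = w \<and> y = a)" using x y by blast
          then show ?thesis using nw[OF av] symm by blast
        qed
      next
        show "\<forall>x\<in>S - {a, w}. \<forall>y\<in>S - {a, w}. \<not> E x y"
        proof (intro ballI)
          fix x y assume "x \<in> S - {a, w}" "y \<in> S - {a, w}"
          then have "x \<in> S - {w} - {a}" "y \<in> S - {w} - {a}" by auto
          then have "x = y" using one by blast
          then show "\<not> E x y" using irr by simp
        qed
      qed
    qed
  qed
  have ub3: "card S \<le> 3" if "induced_bipartite V E S" for S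
  proof -
    have "S \<subseteq> V" using that unfolding induced_bipartite_def by auto
    then have "finite S" using finS by auto
    then have "card S \<le> card (insert w (S - {w}))" by (intro card_mono) auto
    also have "\<dots> = card (S - {w}) + 1" using \<open>finite S\<close> by (subst card_insert_disjoint) auto
    finally have "card S \<le> card (S - {w}) + 1" .
    then show ?thesis using ub[OF that] by linarith
  qed
  obtain x y where xy: "x \<in> V - {w}" "y \<in> V - {w}" "x \<noteq> y"
  proof -
    have "card (V - {w}) > 0" using c2 by simp
    then obtain x where x: "x \<in> V - {w}" by (metis card_gt_0_iff ex_in_conv)
    have "card (V - {w} - {x}) > 0" using c2 x fin by (simp add: card_Diff_singleton)
    then obtain y where y: "y \<in> V - {w} - {x}" by (metis card_gt_0_iff ex_in_conv)
    show ?thesis using that[of x y] x y by blast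
  qed
  have "{x, y, w} - {w} \<subseteq> {x, y}" by blast
  then have "card ({x, y, w} - {w}) \<le> card {x, y}" by (intro card_mono) auto
  also have "card {x, y} \<le> 2" by (metis card_2_iff order_refl xy(3))
  finally have "card ({x, y, w} - {w}) \<le> 2" .
  then have three: "induced_bipartite V E {x, y, w}"
    using lb[of "{x, y, w}"] xy wV by blast
  have c3: "card {x, y, w} = 3" using xy by auto
  have bn: "bip_number V E = 3"
    unfolding bip_number_def
  proof (rule Max_eqI)
    show "finite (card ` {S. induced_bipartite V E S})" using bip_fin[OF fin] by blast
    show "\<And>y. y \<in> card ` {S. induced_bipartite V E S} \<Longrightarrow> y \<le> 3"
    proof -
      fix y assume "y \<in> card ` {S. induced_bipartite V E S}"
      then obtain S where "induced_bipartite V E S" "y = card S" by blast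
      then show "y \<le> 3" using ub3 by simp
    qed
    show "3 \<in> card ` {S. induced_bipartite V E S}" using three c3 by (metis (mono_tags, lifting) image_eqI mem_Collect_eq)
  qed
  have maxc: "card S = 3" if m: "maximal_induced_bipartite V E S" for S
  proof -
    have bS: "induced_bipartite V E S" and mx: "\<And>T. induced_bipartite V E T \<Longrightarrow> S \<subseteq> T \<Longrightarrow> T = S"
      using m unfolding maximal_induced_bipartite_def by auto
    have SV: "S \<subseteq> V" using bS unfolding induced_bipartite_def by auto
    have fS: "finite S" using finS[OF SV] .
    have wS: "w \<in> S"
    proof (rule ccontr)
      assume "w \<notin> S"
      have "induced_bipartite V E (insert w S)"
      proof (rule lb)
        show "insert w S \<subseteq> V" using SV wV by blast
        have "insert w S - {w} = S - {w}" by blast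
        then show "card (insert w S - {w}) \<le> 2" using ub[OF bS] by simp
      qed
      then have "insert w S = S" by (rule mx) blast
      then show False using \<open>w \<notin> S\<close> by blast
    qed
    have c2S: "card (S - {w}) = 2"
    proof (rule ccontr)
      assume "card (S - {w}) \<noteq> 2"
      then have lt: "card (S - {w}) < 2" using ub[OF bS] by linarith
      have "\<not> (V - {w} \<subseteq> S - {w})"
      proof
        assume "V - {w} \<subseteq> S - {w}"
        then have "card (V - {w}) \<le> card (S - {w})" using fS by (simp add: card_mono)
        then show False using lt c2 by linarith
      qed
      then obtain z where z: "z \<in> V - {w}" "z \<notin> S" by blast
      have "insert z S - {w} = insert z (S - {w})" using z by auto
      moreover have "card (insert z (S - {w})) = Suc (card (S - {w}))"
        using fS z by (intro card_insert_disjoint) auto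
      ultimately have "card (insert z S - {w}) \<le> 2" using lt by simp
      moreover have "insert z S \<subseteq> V" using SV z by blast
      ultimately have "induced_bipartite V E (insert z S)"
        using lb[of "insert z S"] by blast
      then have "insert z S = S" by (rule mx) blast
      then show False using z by blast
    qed
    show ?thesis using c2S wS fS by (simp add: card_Diff_singleton_if)
  qed
  have "well_bicovered V E" unfolding well_bicovered_def using maxc by auto
  then show ?thesis using bn by auto
qed


lemma card4: "p \<noteq> q \<Longrightarrow> p \<noteq> r \<Longrightarrow> p \<noteq> s \<Longrightarrow> q \<noteq> r \<Longrightarrow> q \<noteq> s \<Longrightarrow> r \<noteq> s
  \<Longrightarrow> card {p, q, r, s} = 4"
  by simp

lemma forward:
  assumes sg: "simple_graph V E" and cn: "connected_graph V E"
    and wb: "well_bicovered V E" and bn: "bip_number V E = 3"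
  shows "clique_with_pendant V E"
proof -
  have fin: "finite V" and symm: "\<And>x y. E x y \<Longrightarrow> E y x" and irr: "\<And>x. \<not> E x x"
    and inV: "\<And>x y. E x y \<Longrightarrow> x \<in> V \<and> y \<in> V"
    using sg unfolding simple_graph_def by auto
  have conn: "\<And>x y. x \<in> V \<Longrightarrow> y \<in> V \<Longrightarrow> E\<^sup>*\<^sup>* x y" using cn unfolding connected_graph_def by auto
  define F where "F = {S. induced_bipartite V E S}"
  have fF: "finite (card ` F)" using bip_fin[OF fin] unfolding F_def by blast
  have eF: "{} \<in> F" unfolding F_def induced_bipartite_def by blast
  have bnF: "Max (card ` F) = 3" using bn unfolding bip_number_def F_def .
  have ub: "card S \<le> 3" if "induced_bipartite V E S" for S
  proof -
    have "card S \<in> card ` F" using that unfolding F_def by blast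
    then show ?thesis using Max_ge[OF fF] bnF by metis
  qed
  have "3 \<in> card ` F" using Max_in[OF fF] eF bnF by (metis empty_iff image_eqI)
  then obtain S0 where S0: "induced_bipartite V E S0" "card S0 = 3" unfolding F_def by (auto simp: image_iff)
  have S0V: "S0 \<subseteq> V" using S0 unfolding induced_bipartite_def by blast
  have S0m: "maximal_induced_bipartite V E S0"
    unfolding maximal_induced_bipartite_def
  proof (intro conjI allI impI)
    show "induced_bipartite V E S0" by (rule S0(1))
    fix T assume T: "induced_bipartite V E T \<and> S0 \<subseteq> T"
    then have "T \<subseteq> V" unfolding induced_bipartite_def by blast
    then have "finite T" using fin finite_subset by blast
    moreover have "card T \<le> card S0" using ub T S0 by simp
    ultimately show "T = S0" using T card_seteq by blast
  qed
  have m3: "card T = 3" if "maximal_induced_bipartite V E T" for T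
    using wb S0m that S0(2) unfolding well_bicovered_def by metis
  define H where "H x y \<longleftrightarrow> x \<in> V \<and> y \<in> V \<and> x \<noteq> y \<and> \<not> E x y" for x y
  have Hs: "H x y \<Longrightarrow> H y x" for x y unfolding H_def using symm by blast
  have ext: "\<exists>z\<in>V. z \<noteq> x \<and> z \<noteq> y \<and> (\<not> E x z \<or> \<not> E y z)"
    if xy: "x \<in> V" "y \<in> V" "x \<noteq> y" "E x y" for x y
  proof -
    have "induced_bipartite V E {x, y}"
      unfolding induced_bipartite_def
      apply (rule conjI, use xy in blast)
      apply (rule exI[of _ "{x}"], rule exI[of _ "{y}"])
      using xy irr by auto
    then obtain T where T: "maximal_induced_bipartite V E T" "{x, y} \<subseteq> T"
      using bip_max_ext[OF fin] by blast
    have "card T = 3" using m3 T(1) .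
    moreover have "card {x, y} = 2" using xy by simp
    ultimately have "T \<noteq> {x, y}" by auto
    then obtain z where z: "z \<in> T" "z \<noteq> x" "z \<noteq> y" using T(2) by blast
    have Tb: "induced_bipartite V E T" using T(1) unfolding maximal_induced_bipartite_def by blast
    then have "z \<in> V" using z unfolding induced_bipartite_def by blast
    moreover have "\<not> E x z \<or> \<not> E y z"
    proof (rule ccontr)
      assume "\<not> (\<not> E x z \<or> \<not> E y z)"
      then have "E x z" "E y z" by auto
      then show False using bip_triangle[OF Tb, of x y z] T(2) z(1) xy(4) by blast
    qed
    ultimately show ?thesis using z by blast
  qed
  have no2: False if "H p q" "H r s" "p \<noteq> r" "p \<noteq> s" "q \<noteq> r" "q \<noteq> s" for p q r s
  proof -
    have "induced_bipartite V E {p, q, r, s}"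
      unfolding induced_bipartite_def
      apply (rule conjI, use that in \<open>auto simp: H_def\<close>)
      apply (rule exI[of _ "{p, q}"], rule exI[of _ "{r, s}"])
      using that Hs[OF that(1)] Hs[OF that(2)] irr unfolding H_def by auto
    moreover have "card {p, q, r, s} = 4" using that unfolding H_def by (intro card4) auto
    ultimately show False using ub by fastforce
  qed
  have noTri: False if "H p q" "H q r" "H p r" for p q r
  proof -
    have "p \<in> V" "q \<in> V" "p \<noteq> q" using that(1) unfolding H_def by auto
    then obtain s where s: "E p s" using rtc_edge conn by metis
    have sV: "s \<in> V" using inV s by blast
    have ne: "s \<noteq> q" "s \<noteq> r" "s \<noteq> p" using s that irr unfolding H_def by auto
    have "induced_bipartite V E {p, q, r, s}"
      unfolding induced_bipartite_def
      apply (rule conjI, use that sV in \<open>auto simp: H_def\<close>)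
      apply (rule exI[of _ "{p, q, r}"], rule exI[of _ "{s}"])
      using that Hs[OF that(1)] Hs[OF that(2)] Hs[OF that(3)] irr ne unfolding H_def by auto
    moreover have "card {p, q, r, s} = 4" using that ne unfolding H_def by (intro card4) auto
    ultimately show False using ub by fastforce
  qed
  have "card V \<ge> 3" using S0 S0V fin card_mono by metis
  then obtain x0 where x0: "x0 \<in> V" by (metis card.empty card_gt_0_iff ex_in_conv not_numeral_le_zero)
  have "V - {x0} \<noteq> {}"
  proof
    assume "V - {x0} = {}"
    then have "V \<subseteq> {x0}" by blast
    then have "card V \<le> card {x0}" by (intro card_mono) auto
    then have "card V \<le> 1" by simp
    then show False using \<open>card V \<ge> 3\<close> by linarith
  qed
  then obtain y0 where y0: "y0 \<in> V" "y0 \<noteq> x0" by blast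
  obtain a where a: "E x0 a" using rtc_edge conn x0 y0 by metis
  have aV: "a \<in> V" "a \<noteq> x0" using a inV irr by auto
  obtain p q where pq: "H p q"
  proof -
    obtain z where z: "z \<in> V" "z \<noteq> x0" "z \<noteq> a" "\<not> E x0 z \<or> \<not> E a z"
      using ext[of x0 a] x0 aV a by (metis)
    then show ?thesis using that[of x0 z] that[of a z] x0 aV unfolding H_def by blast
  qed
  have dich: "(\<forall>r. H q r \<longrightarrow> r = p) \<or> (\<forall>r. H p r \<longrightarrow> r = q)"
  proof (rule ccontr)
    assume "\<not> ?thesis"
    then obtain r s where r: "H q r" "r \<noteq> p" and s: "H p s" "s \<noteq> q" by blast
    have "r \<noteq> q" "s \<noteq> p" "p \<noteq> q" using r s pq unfolding H_def by auto
    show False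
    proof (cases "r = s")
      case True
      then show False using noTri[of p q r] pq r s by blast
    next
      case False
      then show False using no2[of p s q r] s r \<open>r \<noteq> q\<close> \<open>s \<noteq> p\<close> \<open>p \<noteq> q\<close> by metis
    qed
  qed
  obtain c l where cl: "H c l" and lonly: "\<And>r. H l r \<Longrightarrow> r = c"
    using dich pq Hs by blast
  have allc: "x = c \<or> y = c" if "H x y" for x y
  proof (rule ccontr)
    assume nc: "\<not> (x = c \<or> y = c)"
    have "x \<noteq> l" using lonly that nc by blast
    moreover have "y \<noteq> l" using lonly Hs that nc by blast
    moreover have "c \<noteq> l" "x \<noteq> y" using cl that unfolding H_def by auto
    ultimately show False using no2[of c l x y] cl that nc by metis
  qed
  have cV: "c \<in> V" "l \<in> V" "c \<noteq> l" "\<not> E c l" using cl unfolding H_def by auto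
  obtain u where u: "E c u" using rtc_edge conn cV by metis
  have uV: "u \<in> V" "u \<noteq> c" using u inV irr by auto
  have uniq: "u' = u" if u': "E c u'" for u'
  proof (rule ccontr)
    assume neq: "u' \<noteq> u"
    have u'V: "u' \<in> V" "u' \<noteq> c" using u' inV irr by auto
    have "E u u'"
    proof (rule ccontr)
      assume "\<not> E u u'"
      then have "H u u'" unfolding H_def using uV u'V neq by auto
      then show False using allc uV u'V by blast
    qed
    then obtain z where z: "z \<in> V" "z \<noteq> u" "z \<noteq> u'" "\<not> E u z \<or> \<not> E u' z"
      using ext[of u u'] uV u'V neq by metis
    then have "H u z \<or> H u' z" unfolding H_def using uV u'V by auto
    then have "z = c" using allc uV u'V by blast
    then show False using z u u' symm by blast
  qed
  show ?thesis
    unfolding clique_with_pendant_def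
  proof (rule exI[of _ u], rule exI[of _ c], intro conjI)
    show "u \<in> V" "c \<in> V" "u \<noteq> c" using uV cV by auto
    have "u \<noteq> l" using u cV by blast
    then have "{u, l} \<subseteq> V - {c}" "card {u, l} = 2" using uV cV by auto
    then show "card (V - {c}) \<ge> 2" using fin by (metis card_mono finite_Diff)
    show "\<forall>x\<in>V - {c}. \<forall>y\<in>V - {c}. x \<noteq> y \<longrightarrow> E x y"
    proof (intro ballI impI)
      fix x y assume "x \<in> V - {c}" "y \<in> V - {c}" "x \<noteq> y"
      then show "E x y" using allc[of x y] unfolding H_def by blast
    qed
    show "\<forall>x\<in>V. E c x \<longleftrightarrow> x = u" using uniq u by blast
  qed
qed

theorem mainTheorem8:
  fixes V :: "'a set" and E :: "'a \<Rightarrow> 'a \<Rightarrow> bool"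
  assumes "simple_graph V E" and "connected_graph V E"
  shows "(well_bicovered V E \<and> bip_number V E = 3) \<longleftrightarrow> clique_with_pendant V E"
  using forward[OF assms] backward[OF assms(1)] by blast

end
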